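(* Let $S$ be a numerical semigroup with $\mathrm{msg}(S)=\{n_1<n_2<\cdots<n_e<n_{e+1}\}$, where $e\geq 2$, and let $S'=\langle n_1,n_2,\ldots,n_e\rangle$ with $\mathrm{Ap}(S',n_1)=\{w'(0),w'(1),\ldots,w'(n_1-1)\}$, where $w'(i)$ is the least element of $S'$ congruent to $i$ modulo $n_1$. Then $S$ is a MANS-semigroup if and only if all of the following hold: (1) $S'$ is a MANS-semigroup; (2) $n_e \bmod n_1 < n_{e+1}\bmod n_1$; (3) $w'(n_{e+1}\bmod n_1-1)<n_{e+1}<w'(n_{e+1}\bmod n_1)$.
   Context: $\mathbb{N}=\{0,1,2,\ldots\}$. A numerical semigroup is a subset $S\subseteq\mathbb{N}$ closed under addition, containing $0$, with $\mathbb{N}\setminus S$ finite. $\langle A\rangle$ denotes the submonoid of $(\mathbb{N},+)$ generated by $A$. $\mathrm{msg}(S)$ is the (unique, finite) minimal system of generators of $S$. The multiplicity $\mathrm{m}(S)$ is the least element of $S\setminus\{0\}$. For $n\in S\setminus\{0\}$, $\mathrm{Ap}(S,n)=\{s\in S: s-n\notin S\}=\{w(0),\ldots,w(n-1)\}$ with $w(i)$ the least element of $S$ congruent to $i$ modulo $n$. $S$ is a MANS-semigroup if $w(1)<w(2)<\cdots<w(\mathrm{m}(S)-1)$ for the elements $w(i)$ of $\mathrm{Ap}(S,\mathrm{m}(S))$. $a\bmod b$ is the remainder of the division of $a$ by $b$. *)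

theory Defs
  imports Main
begin

inductive_set gen :: "nat set \<Rightarrow> nat set" for A :: "nat set" where
  gen_zero: "0 \<in> gen A"
| gen_add: "a \<in> A \<Longrightarrow> x \<in> gen A \<Longrightarrow> a + x \<in> gen A"

definition numerical_semigroup :: "nat set \<Rightarrow> bool" where
  "numerical_semigroup S \<longleftrightarrow> 0 \<in> S \<and> (\<forall>a\<in>S. \<forall>b\<in>S. a + b \<in> S) \<and> finite (UNIV - S)"

definition msg :: "nat set \<Rightarrow> nat set" where
  "msg S = (THE A. gen A = S \<and> (\<forall>B. B \<subset> A \<longrightarrow> gen B \<noteq> S))"

definition multiplicity :: "nat set \<Rightarrow> nat" where
  "multiplicity S = (LEAST x. x \<in> S \<and> x \<noteq> 0)"

definition apery_w :: "nat set \<Rightarrow> nat \<Rightarrow> nat \<Rightarrow> nat" where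
  "apery_w S n i = (LEAST s. s \<in> S \<and> s mod n = i mod n)"

definition Apery :: "nat set \<Rightarrow> nat \<Rightarrow> nat set" where
  "Apery S n = {s \<in> S. \<not> (n \<le> s \<and> s - n \<in> S)}"

definition MANS :: "nat set \<Rightarrow> bool" where
  "MANS S \<longleftrightarrow> numerical_semigroup S \<and>
     (\<forall>i j. 1 \<le> i \<longrightarrow> i < j \<longrightarrow> j \<le> multiplicity S - 1 \<longrightarrow>
        apery_w S (multiplicity S) i < apery_w S (multiplicity S) j)"

end

theory Submission
  imports Defs
begin

lemma gen_base: "a \<in> A \<Longrightarrow> a \<in> gen A"
  using gen_add[of a A 0] gen_zero by simp

lemma gen_closed: "x \<in> gen A \<Longrightarrow> y \<in> gen A \<Longrightarrow> x + y \<in> gen A"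
  by (induction x rule: gen.induct) (auto simp: add.assoc intro: gen.intros)

lemma gen_sub:
  assumes "A \<subseteq> S" "0 \<in> S" "\<forall>a\<in>S. \<forall>b\<in>S. a+b \<in> S" shows "gen A \<subseteq> S"
proof
  fix x assume "x \<in> gen A"
  then show "x \<in> S" by (induction x rule: gen.induct) (use assms in auto)
qed

lemma gen_mono: assumes "A \<subseteq> B" shows "gen A \<subseteq> gen B"
proof
  fix x assume "x \<in> gen A"
  then show "x \<in> gen B" by (induction x rule: gen.induct) (use assms in \<open>auto intro: gen.intros\<close>)
qed

lemma gen_mult: "x \<in> gen A \<Longrightarrow> k * x \<in> gen A"
  by (induction k) (auto intro: gen_closed gen_zero)

lemma gen_below: "s \<in> gen (insert a B) \<Longrightarrow> s < a \<Longrightarrow> s \<in> gen B"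
  by (induction s rule: gen.induct) (auto intro: gen.intros)

lemma gen_ge: "s \<in> gen A \<Longrightarrow> s \<noteq> 0 \<Longrightarrow> \<forall>g\<in>A. m \<le> g \<Longrightarrow> m \<le> s"
  by (induction s rule: gen.induct) auto

definition irr :: "nat set \<Rightarrow> nat set" where
  "irr S = {s \<in> S. s \<noteq> 0 \<and> \<not> (\<exists>x\<in>S. \<exists>y\<in>S. x \<noteq> 0 \<and> y \<noteq> 0 \<and> s = x + y)}"

lemma gen_irr:
  assumes "0 \<in> S" "\<forall>a\<in>S. \<forall>b\<in>S. a+b \<in> S"
  shows "gen (irr S) = S"
proof
  have "irr S \<subseteq> S" unfolding irr_def by blast
  then show "gen (irr S) \<subseteq> S" using gen_sub assms by blast
  have "s \<in> S \<longrightarrow> s \<in> gen (irr S)" for s :: nat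
  proof (induction s rule: less_induct)
    case (less s)
    show ?case
    proof (intro impI)
      assume s: "s \<in> S"
      show "s \<in> gen (irr S)"
      proof (cases "s \<in> irr S \<or> s = 0")
        case True then show ?thesis using gen_base gen_zero by blast
      next
        case False
        then have "s \<notin> irr S" "s \<noteq> 0" by auto
        then have "\<exists>x\<in>S. \<exists>y\<in>S. x \<noteq> 0 \<and> y \<noteq> 0 \<and> s = x + y"
          using s unfolding irr_def by simp
        then obtain x y where xy: "x \<in> S" "y \<in> S" "x \<noteq> 0" "y \<noteq> 0" "s = x + y"
          by blast
        have "x < s" "y < s" using xy by auto
        then have "x \<in> gen (irr S)" "y \<in> gen (irr S)" using less xy by auto
        then show ?thesis using gen_closed xy(5) by blast
      qed
    qed
  qed
  then show "S \<subseteq> gen (irr S)" by blast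
qed

lemma irr_in:
  assumes "0 \<in> S" "\<forall>a\<in>S. \<forall>b\<in>S. a+b \<in> S" "B \<subseteq> S" "y \<in> gen B" "y \<in> irr S"
  shows "y \<in> B"
  using assms(4,5)
proof (induction y rule: gen.induct)
  case gen_zero then show ?case by (simp add: irr_def)
next
  case (gen_add a x)
  have xS: "x \<in> S" using gen_sub[OF assms(3,1,2)] gen_add(2) by blast
  have aS: "a \<in> S" using assms(3) gen_add(1) by blast
  show ?case
  proof (cases "a = 0")
    case True then show ?thesis using gen_add by simp
  next
    case False
    show ?thesis
    proof (cases "x = 0")
      case True then show ?thesis using gen_add by simp
    next
      case x0: False
      have "\<not> (\<exists>u\<in>S. \<exists>v\<in>S. u \<noteq> 0 \<and> v \<noteq> 0 \<and> a + x = u + v)"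
        using gen_add(4) unfolding irr_def by simp
      moreover have "\<exists>u\<in>S. \<exists>v\<in>S. u \<noteq> 0 \<and> v \<noteq> 0 \<and> a + x = u + v"
        using aS xS False x0 by blast
      ultimately show ?thesis by contradiction
    qed
  qed
qed

lemma msg_eq:
  assumes "0 \<in> S" "\<forall>a\<in>S. \<forall>b\<in>S. a+b \<in> S"
  shows "msg S = irr S"
  unfolding msg_def
proof (rule the_equality)
  have sub: "irr S \<subseteq> S" unfolding irr_def by blast
  have gi: "gen (irr S) = S" using gen_irr[OF assms] .
  show "gen (irr S) = S \<and> (\<forall>B. B \<subset> irr S \<longrightarrow> gen B \<noteq> S)"
  proof (intro conjI allI impI)
    show "gen (irr S) = S" using gi .
    fix B assume B: "B \<subset> irr S"
    show "gen B \<noteq> S"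
    proof
      assume g: "gen B = S"
      have BS: "B \<subseteq> S" using B sub by (rule psubset_subset_trans[THEN psubset_imp_subset])
      have "y \<in> B" if "y \<in> irr S" for y
      proof -
        have "y \<in> S" using that sub by (rule subsetD[rotated])
        then have "y \<in> gen B" using g by simp
        then show ?thesis using irr_in[OF assms BS _ that] by simp
      qed
      then have "irr S \<subseteq> B" by (rule subsetI)
      then show False using B by (simp add: less_le_not_le)
    qed
  qed
next
  fix A assume A: "gen A = S \<and> (\<forall>B. B \<subset> A \<longrightarrow> gen B \<noteq> S)"
  have "A \<subseteq> gen A" using gen_base by (rule subsetI)
  then have AS: "A \<subseteq> S" using A by simp
  have "y \<in> A" if "y \<in> irr S" for y
  proof -
    have "y \<in> S" using that unfolding irr_def by simp
    then have "y \<in> gen A" using A by simp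
    then show ?thesis using irr_in[OF assms AS _ that] by simp
  qed
  then have IA: "irr S \<subseteq> A" by (rule subsetI)
  show "A = irr S"
  proof (rule ccontr)
    assume "A \<noteq> irr S"
    then have "irr S \<subset> A" using IA by (simp add: psubset_eq)
    then have "gen (irr S) \<noteq> S" using A by simp
    then show False using gen_irr[OF assms] by simp
  qed
qed

definition descent :: "nat set \<Rightarrow> nat \<Rightarrow> bool" where
  "descent T m \<longleftrightarrow> (\<forall>s\<in>T. s mod m \<noteq> 0 \<longrightarrow> (\<exists>t\<in>T. t < s \<and> Suc t mod m = s mod m))"

lemma descent_gen:
  assumes "\<forall>g\<in>A. g mod m \<noteq> 0 \<longrightarrow> (\<exists>t\<in>gen A. t < g \<and> Suc t mod m = g mod m)"
  shows "descent (gen A) m"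
  unfolding descent_def
proof
  fix s assume "s \<in> gen A"
  then show "s mod m \<noteq> 0 \<longrightarrow> (\<exists>t\<in>gen A. t < s \<and> Suc t mod m = s mod m)"
  proof (induction s rule: gen.induct)
    case gen_zero then show ?case by simp
  next
    case (gen_add a x)
    show ?case
    proof (cases "a mod m = 0")
      case False
      then obtain t where t: "t \<in> gen A" "t < a" "Suc t mod m = a mod m" using assms gen_add by blast
      have "Suc (t + x) mod m = (a + x) mod m"
        using mod_add_cong[OF t(3), of x x] by simp
      moreover have "t + x \<in> gen A" using t gen_closed gen_add by blast
      ultimately show ?thesis using t(2) by (intro impI bexI[of _ "t + x"]) auto
    next
      case True
      have e: "(a + x) mod m = x mod m" using mod_add_cong[of a m 0 x x] True by simp
      show ?thesis
      proof
        assume "(a + x) mod m \<noteq> 0"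
        then obtain t where t: "t \<in> gen A" "t < x" "Suc t mod m = x mod m" using gen_add e by auto
        have "a + t \<in> gen A" using t gen_add gen_closed gen_base by blast
        moreover have "Suc (a + t) mod m = (a + x) mod m"
          using mod_add_cong[of a m a "Suc t" x] t(3) by simp
        ultimately show "\<exists>t\<in>gen A. t < a + x \<and> Suc t mod m = (a + x) mod m" using t(2)
          by (intro bexI[of _ "a + t"]) auto
      qed
    qed
  qed
qed

lemma W:
  assumes "numerical_semigroup T" "0 < m"
  shows "\<exists>s\<in>T. s mod m = i mod m"
proof -
  have "finite (UNIV - T)" using assms(1) unfolding numerical_semigroup_def by blast
  then obtain N where N: "\<forall>x\<in>UNIV - T. x < N"
    by (metis finite_nat_set_iff_bounded)
  have "N * m + i mod m \<ge> N" using assms(2) by (simp add: trans_le_add1)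
  then have "N * m + i mod m \<in> T" using N by (meson DiffI UNIV_I not_le)
  moreover have "(N * m + i mod m) mod m = i mod m" by simp
  ultimately show ?thesis by blast
qed

lemma W_props:
  assumes "numerical_semigroup T" "0 < m"
  shows "apery_w T m i \<in> T" "apery_w T m i mod m = i mod m"
    "\<And>s. s \<in> T \<Longrightarrow> s mod m = i mod m \<Longrightarrow> apery_w T m i \<le> s"
proof -
  obtain s where "s \<in> T" "s mod m = i mod m" using W[OF assms] by blast
  then have "apery_w T m i \<in> T \<and> apery_w T m i mod m = i mod m"
    unfolding apery_w_def using LeastI[of "\<lambda>x. x \<in> T \<and> x mod m = i mod m" s] by simp
  then show "apery_w T m i \<in> T" "apery_w T m i mod m = i mod m" by auto
  show "\<And>s. s \<in> T \<Longrightarrow> s mod m = i mod m \<Longrightarrow> apery_w T m i \<le> s"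
    unfolding apery_w_def by (rule Least_le) simp
qed

lemma MANS_of_descent:
  assumes ns: "numerical_semigroup T" and mu: "multiplicity T = m" and m: "0 < m" and d: "descent T m"
  shows "MANS T"
proof -
  let ?w = "apery_w T m"
  have step: "?w (j - 1) < ?w j" if "2 \<le> j" "j \<le> m - 1" for j
  proof -
    have jm: "j mod m = j" using that m by simp
    have "?w j mod m \<noteq> 0" using W_props(2)[OF ns m, of j] jm that by simp
    then obtain t where t: "t \<in> T" "t < ?w j" "Suc t mod m = ?w j mod m"
      using d W_props(1)[OF ns m, of j] unfolding descent_def by blast
    have "Suc t mod m = j" using t(3) W_props(2)[OF ns m, of j] jm by simp
    then have "t mod m = j - 1"
    proof -
      have "t mod m < m" using m by simp
      moreover have "Suc (t mod m) mod m = j" using \<open>Suc t mod m = j\<close> by (simp add: mod_Suc_eq)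
      ultimately show ?thesis using that m
      proof (cases "Suc (t mod m) = m")
        case False
        then have "Suc (t mod m) < m" using \<open>t mod m < m\<close> by simp
        then show ?thesis using \<open>Suc (t mod m) mod m = j\<close> by simp
      qed auto
    qed
    then have "t mod m = (j - 1) mod m" using that m by simp
    then have "?w (j - 1) \<le> t" using W_props(3)[OF ns m] t(1) by blast
    then show ?thesis using t(2) by simp
  qed
  have "\<forall>i. 1 \<le> i \<longrightarrow> i < j \<longrightarrow> j \<le> m - 1 \<longrightarrow> ?w i < ?w j" for j
  proof (induction j)
    case 0 then show ?case by simp
  next
    case (Suc j)
    show ?case
    proof (intro allI impI)
      fix i assume i: "1 \<le> i" "i < Suc j" "Suc j \<le> m - 1"
      have st: "?w j < ?w (Suc j)" using step[of "Suc j"] i by simp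
      show "?w i < ?w (Suc j)"
      proof (cases "i = j")
        case True then show ?thesis using st by simp
      next
        case False
        then have "?w i < ?w j" using Suc i by simp
        then show ?thesis using st by simp
      qed
    qed
  qed
  then show ?thesis unfolding MANS_def using ns mu by blast
qed

lemma descent_of_MANS:
  assumes M: "MANS T" and mu: "multiplicity T = m" and m: "0 < m"
  shows "descent T m"
  unfolding descent_def
proof (intro ballI impI)
  have ns: "numerical_semigroup T" using M MANS_def by blast
  let ?w = "apery_w T m"
  fix s assume s: "s \<in> T" "s mod m \<noteq> 0"
  define c where "c = s mod m"
  have cm: "c < m" "c \<noteq> 0" using m s c_def by auto
  show "\<exists>t\<in>T. t < s \<and> Suc t mod m = s mod m"
  proof (cases "c = 1")
    case True
    have "0 \<in> T" using ns numerical_semigroup_def by blast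
    moreover have "0 < s" using s by (cases s) auto
    moreover have "Suc 0 mod m = s mod m" using True cm c_def by simp
    ultimately show ?thesis by blast
  next
    case False
    have lt: "?w (c - 1) < ?w c" using M mu cm False unfolding MANS_def by auto
    have "?w c \<le> s" using W_props(3)[OF ns m s(1)] c_def by simp
    moreover have "Suc (?w (c - 1)) mod m = s mod m"
    proof -
      have "?w (c - 1) mod m = c - 1" using W_props(2)[OF ns m, of "c - 1"] cm by simp
      then have "Suc (?w (c - 1)) mod m = Suc (c - 1) mod m" by (metis mod_Suc_eq)
      then show ?thesis using cm c_def by simp
    qed
    ultimately show ?thesis using lt W_props(1)[OF ns m] by (intro bexI[of _ "?w (c - 1)"]) auto
  qed
qed


lemma MANS_lt:
  assumes "MANS T" "multiplicity T = m" "1 \<le> i" "i < j" "j \<le> m - 1"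
  shows "apery_w T m i < apery_w T m j"
  using assms unfolding MANS_def by blast

theorem theorem4p4:
  fixes S :: "nat set" and n :: "nat \<Rightarrow> nat" and e :: nat
  assumes "numerical_semigroup S"
    and "e \<ge> 2"
    and "strict_mono_on {1..e+1} n"
    and "msg S = n ` {1..e+1}"
  shows "MANS S \<longleftrightarrow>
     (MANS (gen (n ` {1..e})) \<and>
      n e mod n 1 < n (e+1) mod n 1 \<and>
      apery_w (gen (n ` {1..e})) (n 1) (n (e+1) mod n 1 - 1) < n (e+1) \<and>
      n (e+1) < apery_w (gen (n ` {1..e})) (n 1) (n (e+1) mod n 1))"
proof -
  let ?A = "n ` {1..e+1}"
  let ?B = "n ` {1..e}"
  let ?S' = "gen ?B"
  let ?m = "n 1"
  let ?a = "n (e+1)"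
  let ?r = "?a mod ?m"
  let ?w = "apery_w S ?m"
  let ?w' = "apery_w ?S' ?m"
  have ns: "0 \<in> S" "\<forall>x\<in>S. \<forall>y\<in>S. x + y \<in> S"
    using assms(1) unfolding numerical_semigroup_def by auto
  have Airr: "?A = irr S" using msg_eq[OF ns] assms(4) by simp
  have genA: "gen ?A = S" using gen_irr[OF ns] Airr by simp
  have AS: "?A \<subseteq> S" using Airr by (auto simp: irr_def)
  have mono: "n i < n j" if "1 \<le> i" "i < j" "j \<le> e+1" for i j
    using strict_mono_onD[OF assms(3)] that by auto
  have mge: "\<forall>g\<in>?A. ?m \<le> g"
  proof
    fix g assume "g \<in> ?A"
    then obtain i where i: "i \<in> {1..e+1}" "g = n i" by blast
    show "?m \<le> g" using i mono[of 1 i] by (cases "i = 1") auto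
  qed
  have mA: "?m \<in> ?A" and mB: "?m \<in> ?B" using assms(2) by auto
  have m0: "0 < ?m" using mA Airr by (auto simp: irr_def)
  have mult: "multiplicity S = ?m"
    unfolding multiplicity_def
  proof (rule Least_equality)
    show "?m \<in> S \<and> ?m \<noteq> 0" using mA AS m0 by auto
    fix y assume "y \<in> S \<and> y \<noteq> 0"
    then show "?m \<le> y" using gen_ge[of y ?A ?m] genA mge by auto
  qed
  have BA: "?B \<subseteq> ?A" by auto
  have SB: "?S' \<subseteq> S" using gen_mono[OF BA] genA by simp
  have Ains: "?A = insert ?a ?B"
  proof -
    have "{1..e+1} = insert (e+1) {1..e}" by auto
    then show ?thesis by simp
  qed
  have below: "s \<in> ?S'" if "s \<in> S" "s < ?a" for s
    using gen_below[of s ?a ?B] that genA Ains by simp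
  have Blt: "\<forall>g\<in>?B. g < ?a" using mono by auto
  have Bge: "\<forall>g\<in>?B. ?m \<le> g" using mge by auto
  have BS: "?B \<subseteq> S" using AS by auto
  have a_irr: "?a \<in> irr S" using Airr by auto
  have a_notin: "?a \<notin> ?S'"
  proof
    assume "?a \<in> ?S'"
    then have "?a \<in> ?B" using irr_in[OF ns BS _ a_irr] by blast
    then show False using Blt by blast
  qed
  have mult': "multiplicity ?S' = ?m"
    unfolding multiplicity_def
  proof (rule Least_equality)
    show "?m \<in> ?S' \<and> ?m \<noteq> 0" using mB gen_base m0 by auto
    fix y assume "y \<in> ?S' \<and> y \<noteq> 0"
    then show "?m \<le> y" using gen_ge[of y ?B ?m] Bge by auto
  qed
  have G: "g mod ?m \<noteq> 0 \<and> (\<forall>s\<in>S. s mod ?m = g mod ?m \<longrightarrow> g \<le> s)"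
    if g: "g \<in> ?A" "g \<noteq> ?m" for g
  proof -
    have gi: "g \<in> irr S" using g Airr by simp
    have mS: "?m \<in> S" using mA AS by auto
    have P: "g \<le> s" if s: "s \<in> S" "s mod ?m = g mod ?m" for s
    proof (rule ccontr)
      assume "\<not> g \<le> s"
      then have sg: "s < g" by simp
      then have "?m dvd g - s" using s(2) mod_eq_dvd_iff_nat[of s g ?m] by simp
      then obtain k where k: "g - s = ?m * k" by (auto elim: dvdE)
      have "g - s \<noteq> 0" using sg by simp
      then have k0: "k \<noteq> 0" using k by (metis mult_0_right)
      have mg: "?m \<in> gen ?A" using gen_base[OF mA] .
      have kmul: "\<And>j. j * ?m \<in> S" using gen_mult[OF mg] genA by simp
      have kS: "k * ?m \<in> S" using kmul .
      have gs: "g = s + k * ?m" using k sg by (simp add: mult.commute)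
      show False
      proof (cases "s = 0")
        case False
        have "k * ?m \<noteq> 0" using k0 m0 by simp
        then show False using gi s(1) kS gs False unfolding irr_def by blast
      next
        case True
        then have "k \<noteq> 1" using gs g(2) by auto
        then obtain k' where k': "k = Suc k'" "k' \<noteq> 0" using k0 by (cases k) auto
        have "g = ?m + k' * ?m" using gs True k' by simp
        moreover have "k' * ?m \<noteq> 0" using k' m0 by simp
        moreover have "k' * ?m \<in> S" using kmul .
        ultimately show False using gi mS m0 unfolding irr_def by blast
      qed
    qed
    moreover have "g mod ?m \<noteq> 0"
    proof
      assume "g mod ?m = 0"
      then have "g \<le> 0" using P[of 0] ns by simp
      then show False using gi by (simp add: irr_def)
    qed
    ultimately show ?thesis by blast
  qed
  have wA: "?w (g mod ?m) = g" if "g \<in> ?A" "g \<noteq> ?m" for g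
    unfolding apery_w_def
    by (rule Least_equality) (use G[OF that] that AS in auto)
  show ?thesis
  proof
    assume M: "MANS S"
    have dS: "descent S ?m" using descent_of_MANS[OF M mult m0] .
    have dS': "descent ?S' ?m"
    proof (rule descent_gen, intro ballI impI)
      fix g assume g: "g \<in> ?B" "g mod ?m \<noteq> 0"
      then obtain t where t: "t \<in> S" "t < g" "Suc t mod ?m = g mod ?m"
        using dS BS unfolding descent_def by blast
      have "t < ?a" using t(2) Blt g(1) by (meson order.strict_trans)
      then have "t \<in> ?S'" using below t(1) by blast
      then show "\<exists>t\<in>?S'. t < g \<and> Suc t mod ?m = g mod ?m" using t by blast
    qed
    have neA: "n e \<in> ?A" "n e \<noteq> ?m" using assms(2) mono[of 1 e] by auto
    have aA: "?a \<in> ?A" "?a \<noteq> ?m" using assms(2) mono[of 1 "e+1"] by auto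
    have ce: "n e mod ?m \<noteq> 0" "n e mod ?m < ?m" using G[OF neA] m0 by auto
    have ra: "?r \<noteq> 0" "?r < ?m" using G[OF aA] m0 by auto
    have wce: "?w (n e mod ?m) = n e" using wA[OF neA] .
    have wr: "?w ?r = ?a" using wA[OF aA] .
    have ea: "n e < ?a" using mono[of e "e+1"] assms(2) by auto
    have c2: "n e mod ?m < ?r"
    proof (rule ccontr)
      assume "\<not> n e mod ?m < ?r"
      then consider "n e mod ?m = ?r" | "?r < n e mod ?m" by linarith
      then show False
      proof cases
        case 1 then show False using wce wr ea by simp
      next
        case 2
        then have "?w ?r < ?w (n e mod ?m)" using MANS_lt[OF M mult, of ?r "n e mod ?m"] ra ce by linarith
        then show False using wce wr ea by simp
      qed
    qed
    have r2: "2 \<le> ?r" using c2 ce by linarith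
    have nsS: "numerical_semigroup S" using assms(1) .
    have w1: "?w 1 < ?a" using MANS_lt[OF M mult, of 1 ?r] r2 ra wr by linarith
    have w1S: "?w 1 \<in> ?S'" using below[OF W_props(1)[OF nsS m0] w1] .
    have w1m: "?w 1 mod ?m = 1" using W_props(2)[OF nsS m0, of 1] ra r2 by simp
    have nsS': "numerical_semigroup ?S'"
      unfolding numerical_semigroup_def
    proof (intro conjI ballI)
      show "0 \<in> ?S'" by (rule gen_zero)
      show "x + y \<in> ?S'" if "x \<in> ?S'" "y \<in> ?S'" for x y using gen_closed that by blast
      let ?x = "?w 1"
      have "UNIV - ?S' \<subseteq> {..< ?m * ?x}"
      proof
        fix y assume y: "y \<in> UNIV - ?S'"
        show "y \<in> {..< ?m * ?x}"
        proof (rule ccontr)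
          assume "y \<notin> {..< ?m * ?x}"
          then have yge: "?m * ?x \<le> y" by simp
          let ?i = "y mod ?m"
          have ix: "?i * ?x \<le> y"
          proof -
            have "?i \<le> ?m" using m0 by (simp add: less_imp_le)
            then have "?i * ?x \<le> ?m * ?x" by (rule mult_le_mono1)
            then show ?thesis using yge by linarith
          qed
          have "(?i * ?x) mod ?m = (?i * (?x mod ?m)) mod ?m" by (simp add: mod_mult_right_eq)
          also have "... = y mod ?m" using w1m by simp
          finally have "y mod ?m = (?i * ?x) mod ?m" by simp
          then have "?m dvd y - ?i * ?x" using mod_eq_dvd_iff_nat[OF ix] by blast
          then obtain k where k: "y - ?i * ?x = ?m * k" by (auto elim: dvdE)
          have "?i * ?x \<in> ?S'" using gen_mult w1S by blast
          moreover have "k * ?m \<in> ?S'" using gen_mult gen_base mB by blast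
          ultimately have "?i * ?x + k * ?m \<in> ?S'" using gen_closed by blast
          moreover have "?i * ?x + k * ?m = y" using k ix by (simp add: mult.commute)
          ultimately show False using y by simp
        qed
      qed
      then show "finite (UNIV - ?S')" using finite_subset by blast
    qed
    have MS': "MANS ?S'" using MANS_of_descent[OF nsS' mult' m0 dS'] .
    have wr1: "?w (?r - 1) < ?a" using MANS_lt[OF M mult, of "?r - 1" ?r] r2 ra wr by linarith
    have wr1S: "?w (?r - 1) \<in> ?S'" using below[OF W_props(1)[OF nsS m0] wr1] .
    have "?w' (?r - 1) \<le> ?w (?r - 1)"
      using W_props(3)[OF nsS' m0 wr1S] W_props(2)[OF nsS m0, of "?r - 1"] by simp
    then have c3: "?w' (?r - 1) < ?a" using wr1 by simp
    have w'r: "?w' ?r \<in> ?S'" "?w' ?r mod ?m = ?r" using W_props(1,2)[OF nsS' m0, of ?r] by auto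
    have "?a \<le> ?w' ?r" using G[OF aA] w'r SB by auto
    moreover have "?a \<noteq> ?w' ?r" using w'r a_notin by auto
    ultimately have c4: "?a < ?w' ?r" by simp
    show "MANS ?S' \<and> n e mod ?m < ?r \<and> ?w' (?r - 1) < ?a \<and> ?a < ?w' ?r"
      using MS' c2 c3 c4 by blast
  next
    assume R: "MANS ?S' \<and> n e mod ?m < ?r \<and> ?w' (?r - 1) < ?a \<and> ?a < ?w' ?r"
    have nsS': "numerical_semigroup ?S'" using R MANS_def by blast
    have dS': "descent ?S' ?m" using descent_of_MANS[OF conjunct1[OF R] mult' m0] .
    have "descent (gen ?A) ?m"
    proof (rule descent_gen, intro ballI impI)
      fix g assume g: "g \<in> ?A" "g mod ?m \<noteq> 0"
      show "\<exists>t\<in>gen ?A. t < g \<and> Suc t mod ?m = g mod ?m"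
      proof (cases "g \<in> ?B")
        case True
        then obtain t where t: "t \<in> ?S'" "t < g" "Suc t mod ?m = g mod ?m"
          using dS' g gen_base unfolding descent_def by blast
        then show ?thesis using SB genA by blast
      next
        case False
        then have ga: "g = ?a" using g Ains by blast
        have r0: "?r \<noteq> 0" using R by linarith
        have rl: "?r - 1 < ?m" using m0 by (meson less_imp_diff_less mod_less_divisor)
        have "?w' (?r - 1) mod ?m = ?r - 1"
          using W_props(2)[OF nsS' m0, of "?r - 1"] rl by simp
        then have "Suc (?w' (?r - 1)) mod ?m = Suc (?r - 1) mod ?m" by (metis mod_Suc_eq)
        also have "... = ?r" using r0 m0 by simp
        finally have "Suc (?w' (?r - 1)) mod ?m = g mod ?m" using ga by simp
        moreover have "?w' (?r - 1) \<in> gen ?A" using W_props(1)[OF nsS' m0] SB genA by blast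
        ultimately show ?thesis using R ga by blast
      qed
    qed
    then have "descent S ?m" using genA by simp
    then show "MANS S" using MANS_of_descent[OF assms(1) mult m0] by blast
  qed
qed

end
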